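(* Let $M(X,Y)$ be the set of multirelations $X\leftrightarrow\mathcal{P}Y$ and $U=X\times\mathcal{P}(Y)$. (1) $\sqsubseteq_\downarrow$ is a preorder on $M(X,Y)$; $\Cup$ and $\Cap$ are associative and commutative operations with units $1_\Cup$ and $1_\Cap$ respectively, each monotone in both arguments with respect to $\sqsubseteq_\downarrow$; and $\emptyset\sqsubseteq_\downarrow R\sqsubseteq_\downarrow U$ for all $R$. (2) The same holds for $\sqsubseteq_\uparrow$, with least element $U$ and greatest element $\emptyset$, i.e. $U\sqsubseteq_\uparrow R\sqsubseteq_\uparrow\emptyset$ for all $R$. (3) The same holds for $\sqsubseteq_\updownarrow$ (a preorder with respect to which $\Cup$ and $\Cap$ are monotone in both arguments). (4) Inner complementation $R\mapsto\widetilde{R}$ is a bijection interchanging $\Cup$ with $\Cap$ and $1_\Cup$ with $1_\Cap$, and for all $R,S$: $R\sqsubseteq_\downarrow S\iff\widetilde{S}\sqsubseteq_\uparrow\widetilde{R}$, $R\sqsubseteq_\uparrow S\iff\widetilde{S}\sqsubseteq_\downarrow\widetilde{R}$, and $R\sqsubseteq_\updownarrow S\iff\widetilde{S}\sqsubseteq_\updownarrow\widetilde{R}$. (5) Each of $\sqsubseteq_\downarrow,\sqsubseteq_\uparrow,\sqsubseteq_\updownarrow$ (denote it $\sqsubseteq$) is a precongruence for $\cup$, $(-)^{\uparrow}$, $(-)^{\downarrow}$ and $(-)^{\updownarrow}$: if $R\sqsubseteq S$ then $R\cup T\sqsubseteq S\cup T$, $T\cup R\sqsubseteq T\cup S$,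 $R^{\uparrow}\sqsubseteq S^{\uparrow}$, $R^{\downarrow}\sqsubseteq S^{\downarrow}$ and $R^{\updownarrow}\sqsubseteq S^{\updownarrow}$. (6) Peleg composition preserves $\sqsubseteq_\downarrow$, $\sqsubseteq_\uparrow$ and $\sqsubseteq_\updownarrow$ in its second argument: if $R\sqsubseteq S$ for $R,S:Y\leftrightarrow\mathcal{P}Z$, then $T\ast R\sqsubseteq T\ast S$ for every $T:X\leftrightarrow\mathcal{P}Y$.
   Context: $R\Cup S=\{(a,A\cup B)\mid (a,A)\in R,(a,B)\in S\}$, $R\Cap S=\{(a,A\cap B)\mid (a,A)\in R,(a,B)\in S\}$, $1_\Cup=\{(a,\emptyset)\mid a\in X\}$, $1_\Cap=\{(a,Y)\mid a\in X\}$, $\widetilde{R}=\{(a,Y\setminus A)\mid (a,A)\in R\}$. $R^{\uparrow}=\{(a,A)\mid\exists B.(a,B)\in R\wedge B\subseteq A\}$, $R^{\downarrow}=\{(a,A)\mid\exists B.(a,B)\in R\wedge A\subseteq B\}$, $R^{\updownarrow}=R^{\uparrow}\cap R^{\downarrow}$. Preorders: $R\sqsubseteq_\uparrow S\iff S\subseteq R^{\uparrow}$; $R\sqsubseteq_\downarrow S\iff R\subseteq S^{\downarrow}$; $R\sqsubseteq_\updownarrow S\iff R\sqsubseteq_\downarrow S\wedge R\sqsubseteq_\uparrow S$. Peleg composition of $T:X\leftrightarrow\mathcal{P}Y$ and $S:Y\leftrightarrow\mathcal{P}Z$: $T\ast S=\{(a,C)\mid\exists B.\ (a,B)\in T\wedge\exists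 f:Y\to\mathcal{P}Z.\ (\forall b\in B.(b,f(b))\in S)\wedge C=\bigcup_{b\in B}f(b)\}$. *)

theory Defs
  imports Main
begin

text \<open>Multirelations X <-> P Y are modelled as sets of type ('a \<times> 'b set) set,
  with X = UNIV :: 'a set and Y = UNIV :: 'b set.\<close>

type_synonym ('a, 'b) mrel = "('a \<times> 'b set) set"

definition mcup :: "('a,'b) mrel \<Rightarrow> ('a,'b) mrel \<Rightarrow> ('a,'b) mrel" where
  "mcup R S = {(a, A \<union> B) | a A B. (a, A) \<in> R \<and> (a, B) \<in> S}"

definition mcap :: "('a,'b) mrel \<Rightarrow> ('a,'b) mrel \<Rightarrow> ('a,'b) mrel" where
  "mcap R S = {(a, A \<inter> B) | a A B. (a, A) \<in> R \<and> (a, B) \<in> S}"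

definition one_cup :: "('a,'b) mrel" where
  "one_cup = {(a, {}) | a. a \<in> UNIV}"

definition one_cap :: "('a,'b) mrel" where
  "one_cap = {(a, UNIV) | a. a \<in> UNIV}"

definition icompl :: "('a,'b) mrel \<Rightarrow> ('a,'b) mrel" where
  "icompl R = {(a, UNIV - A) | a A. (a, A) \<in> R}"

definition mr_up :: "('a,'b) mrel \<Rightarrow> ('a,'b) mrel" where
  "mr_up R = {(a, A) | a A. \<exists>B. (a, B) \<in> R \<and> B \<subseteq> A}"

definition mr_down :: "('a,'b) mrel \<Rightarrow> ('a,'b) mrel" where
  "mr_down R = {(a, A) | a A. \<exists>B. (a, B) \<in> R \<and> A \<subseteq> B}"

definition mr_updown :: "('a,'b) mrel \<Rightarrow> ('a,'b) mrel" where
  "mr_updown R = mr_up R \<inter> mr_down R"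

definition le_up :: "('a,'b) mrel \<Rightarrow> ('a,'b) mrel \<Rightarrow> bool" where
  "le_up R S \<longleftrightarrow> S \<subseteq> mr_up R"

definition le_down :: "('a,'b) mrel \<Rightarrow> ('a,'b) mrel \<Rightarrow> bool" where
  "le_down R S \<longleftrightarrow> R \<subseteq> mr_down S"

definition le_updown :: "('a,'b) mrel \<Rightarrow> ('a,'b) mrel \<Rightarrow> bool" where
  "le_updown R S \<longleftrightarrow> le_down R S \<and> le_up R S"

definition peleg :: "('a,'b) mrel \<Rightarrow> ('b,'c) mrel \<Rightarrow> ('a,'c) mrel" where
  "peleg T S = {(a, C) | a C. \<exists>B. (a, B) \<in> T \<and>
     (\<exists>f :: 'b \<Rightarrow> 'c set. (\<forall>b\<in>B. (b, f b) \<in> S) \<and> C = (\<Union>b\<in>B. f b))}"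

end

theory Submission
  imports Defs
begin

lemma mem_mcup: "(a,C) \<in> mcup R S \<longleftrightarrow> (\<exists>A B. (a,A)\<in>R \<and> (a,B)\<in>S \<and> C = A\<union>B)"
  unfolding mcup_def by blast
lemma mem_mcap: "(a,C) \<in> mcap R S \<longleftrightarrow> (\<exists>A B. (a,A)\<in>R \<and> (a,B)\<in>S \<and> C = A\<inter>B)"
  unfolding mcap_def by blast
lemma mem_up: "(a,C) \<in> mr_up R \<longleftrightarrow> (\<exists>B. (a,B)\<in>R \<and> B \<subseteq> C)"
  unfolding mr_up_def by blast
lemma mem_down: "(a,C) \<in> mr_down R \<longleftrightarrow> (\<exists>B. (a,B)\<in>R \<and> C \<subseteq> B)"
  unfolding mr_down_def by blast
lemma mem_icompl: "(a,C) \<in> icompl R \<longleftrightarrow> (a, -C) \<in> R"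
  unfolding icompl_def by (auto simp: Compl_eq_Diff_UNIV[symmetric])

lemma mcup_assoc: "mcup R (mcup S T) = mcup (mcup R S) T"
proof (intro set_eqI iffI)
  fix x assume "x \<in> mcup R (mcup S T)"
  then obtain a A B C where x: "x = (a, A \<union> (B \<union> C))" and h: "(a,A)\<in>R" "(a,B)\<in>S" "(a,C)\<in>T"
    unfolding mcup_def by blast
  have "(a, A \<union> B) \<in> mcup R S" using h unfolding mem_mcup by blast
  then have "(a, (A \<union> B) \<union> C) \<in> mcup (mcup R S) T" using h(3) unfolding mem_mcup by blast
  then show "x \<in> mcup (mcup R S) T" using x by (simp add: Un_assoc)
next
  fix x assume "x \<in> mcup (mcup R S) T"
  then obtain a A B C where x: "x = (a, (A \<union> B) \<union> C)" and h: "(a,A)\<in>R" "(a,B)\<in>S" "(a,C)\<in>T"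
    unfolding mcup_def by blast
  have "(a, B \<union> C) \<in> mcup S T" using h unfolding mem_mcup by blast
  then have "(a, A \<union> (B \<union> C)) \<in> mcup R (mcup S T)" using h(1) unfolding mem_mcup by blast
  then show "x \<in> mcup R (mcup S T)" using x by (simp add: Un_assoc)
qed

lemma mcap_assoc: "mcap R (mcap S T) = mcap (mcap R S) T"
proof (intro set_eqI iffI)
  fix x assume "x \<in> mcap R (mcap S T)"
  then obtain a A B C where x: "x = (a, A \<inter> (B \<inter> C))" and h: "(a,A)\<in>R" "(a,B)\<in>S" "(a,C)\<in>T"
    unfolding mcap_def by blast
  have "(a, A \<inter> B) \<in> mcap R S" using h unfolding mem_mcap by blast
  then have "(a, (A \<inter> B) \<inter> C) \<in> mcap (mcap R S) T" using h(3) unfolding mem_mcap by blast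
  then show "x \<in> mcap (mcap R S) T" using x by (simp add: Int_assoc)
next
  fix x assume "x \<in> mcap (mcap R S) T"
  then obtain a A B C where x: "x = (a, (A \<inter> B) \<inter> C)" and h: "(a,A)\<in>R" "(a,B)\<in>S" "(a,C)\<in>T"
    unfolding mcap_def by blast
  have "(a, B \<inter> C) \<in> mcap S T" using h unfolding mem_mcap by blast
  then have "(a, A \<inter> (B \<inter> C)) \<in> mcap R (mcap S T)" using h(1) unfolding mem_mcap by blast
  then show "x \<in> mcap R (mcap S T)" using x by (simp add: Int_assoc)
qed

lemma mcup_sub: "mcup R S \<subseteq> mcup S R"
proof
  fix x assume "x \<in> mcup R S"
  then obtain a A B where x: "x = (a, B \<union> A)" and h: "(a,A)\<in>R" "(a,B)\<in>S"
    unfolding mcup_def by (auto simp: Un_commute)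
  show "x \<in> mcup S R" unfolding x mem_mcup using h by blast
qed
lemma mcup_comm: "mcup R S = mcup S R"
  by (simp add: mcup_sub subset_antisym)
lemma mcap_sub: "mcap R S \<subseteq> mcap S R"
proof
  fix x assume "x \<in> mcap R S"
  then obtain a A B where x: "x = (a, B \<inter> A)" and h: "(a,A)\<in>R" "(a,B)\<in>S"
    unfolding mcap_def by (auto simp: Int_commute)
  show "x \<in> mcap S R" unfolding x mem_mcap using h by blast
qed
lemma mcap_comm: "mcap R S = mcap S R"
  by (simp add: mcap_sub subset_antisym)

lemma mcup_one: "mcup one_cup R = R \<and> mcup R one_cup = R"
  by (auto simp: mcup_def one_cup_def)
lemma mcap_one: "mcap one_cap R = R \<and> mcap R one_cap = R"
  by (auto simp: mcap_def one_cap_def)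

lemma le_down_iff: "le_down R S \<longleftrightarrow> (\<forall>a A. (a,A)\<in>R \<longrightarrow> (\<exists>B. (a,B)\<in>S \<and> A \<subseteq> B))"
  unfolding le_down_def by (auto simp: mem_down)
lemma le_up_iff: "le_up R S \<longleftrightarrow> (\<forall>a A. (a,A)\<in>S \<longrightarrow> (\<exists>B. (a,B)\<in>R \<and> B \<subseteq> A))"
  unfolding le_up_def by (auto simp: mem_up)

lemma down_pre: "reflp le_down \<and> transp le_down"
  unfolding reflp_def transp_def le_down_iff by (meson order_refl order_trans)
lemma up_pre: "reflp le_up \<and> transp le_up"
  unfolding reflp_def transp_def le_up_iff by (meson order_refl order_trans)
lemma updown_pre: "reflp le_updown \<and> transp le_updown"
  using down_pre up_pre unfolding reflp_def transp_def le_updown_def by meson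

lemma down_cup: "le_down R R' \<Longrightarrow> le_down S S' \<Longrightarrow> le_down (mcup R S) (mcup R' S')"
  unfolding le_down_iff mem_mcup by (metis Un_mono)
lemma down_cap: "le_down R R' \<Longrightarrow> le_down S S' \<Longrightarrow> le_down (mcap R S) (mcap R' S')"
  unfolding le_down_iff mem_mcap by (metis Int_mono)
lemma up_cup: "le_up R R' \<Longrightarrow> le_up S S' \<Longrightarrow> le_up (mcup R S) (mcup R' S')"
  unfolding le_up_iff mem_mcup by (metis Un_mono)
lemma up_cap: "le_up R R' \<Longrightarrow> le_up S S' \<Longrightarrow> le_up (mcap R S) (mcap R' S')"
  unfolding le_up_iff mem_mcap by (metis Int_mono)

lemma icompl_icompl: "icompl (icompl R) = R"
  by (auto simp: mem_icompl)
lemma icompl_cup: "icompl (mcup R S) = mcap (icompl R) (icompl S)"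
proof (intro set_eqI iffI)
  fix x assume "x \<in> icompl (mcup R S)"
  then obtain a A B where "x = (a, - (A \<union> B))" "(a,A)\<in>R" "(a,B)\<in>S"
    unfolding icompl_def mcup_def Compl_eq_Diff_UNIV by blast
  moreover have "(a, -A) \<in> icompl R" "(a, -B) \<in> icompl S" using calculation by (simp_all add: mem_icompl)
  ultimately show "x \<in> mcap (icompl R) (icompl S)" unfolding mcap_def by auto
next
  fix x assume "x \<in> mcap (icompl R) (icompl S)"
  then obtain a A B where "x = (a, A \<inter> B)" "(a,A)\<in>icompl R" "(a,B)\<in>icompl S"
    unfolding mcap_def by blast
  moreover have "(a, -A \<union> -B) \<in> mcup R S" using calculation unfolding mem_mcup mem_icompl by blast
  moreover have "- (A \<inter> B) = -A \<union> -B" by simp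
  ultimately show "x \<in> icompl (mcup R S)" by (simp add: mem_icompl)
qed
lemma icompl_cap: "icompl (mcap R S) = mcup (icompl R) (icompl S)"
  by (metis icompl_cup icompl_icompl)
lemma icompl_one_cup: "icompl one_cup = one_cap"
  by (auto simp: mem_icompl one_cup_def one_cap_def)
lemma icompl_one_cap: "icompl one_cap = one_cup"
  by (metis icompl_icompl icompl_one_cup)
lemma down_icompl: "le_down R S \<longleftrightarrow> le_up (icompl S) (icompl R)"
  unfolding le_down_iff le_up_iff mem_icompl by (metis Compl_subset_Compl_iff double_compl)
lemma up_icompl: "le_up R S \<longleftrightarrow> le_down (icompl S) (icompl R)"
  unfolding le_down_iff le_up_iff mem_icompl by (metis Compl_subset_Compl_iff double_compl)
lemma mem_updown: "(a,C) \<in> mr_updown R \<longleftrightarrow> (a,C) \<in> mr_up R \<and> (a,C) \<in> mr_down R"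
  unfolding mr_updown_def by blast
lemma sub_updown: "x \<in> R \<Longrightarrow> x \<in> mr_updown R"
  by (cases x) (auto simp: mem_updown mem_up mem_down)

lemma down_Un1: "le_down R S \<Longrightarrow> le_down (R\<union>T) (S\<union>T)"
  unfolding le_down_iff by blast
lemma down_Un2: "le_down R S \<Longrightarrow> le_down (T\<union>R) (T\<union>S)"
  unfolding le_down_iff by blast
lemma up_Un1: "le_up R S \<Longrightarrow> le_up (R\<union>T) (S\<union>T)"
  unfolding le_up_iff by blast
lemma up_Un2: "le_up R S \<Longrightarrow> le_up (T\<union>R) (T\<union>S)"
  unfolding le_up_iff by blast

lemma down_up: "le_down R S \<Longrightarrow> le_down (mr_up R) (mr_up S)"
  unfolding le_down_iff mem_up by (meson top_greatest)
lemma down_down: "le_down R S \<Longrightarrow> le_down (mr_down R) (mr_down S)"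
  unfolding le_down_iff mem_down by (meson order_trans order_refl)
lemma down_updown: assumes "le_down R S" shows "le_down (mr_updown R) (mr_updown S)"
  unfolding le_down_iff
proof (intro allI impI)
  fix a A assume "(a,A) \<in> mr_updown R"
  then obtain B where "(a,B)\<in>R" "A \<subseteq> B" by (auto simp: mem_updown mem_down)
  then obtain C where "(a,C)\<in>S" "A \<subseteq> C" using assms unfolding le_down_iff by blast
  then show "\<exists>C. (a,C) \<in> mr_updown S \<and> A \<subseteq> C" using sub_updown by blast
qed
lemma up_up: "le_up R S \<Longrightarrow> le_up (mr_up R) (mr_up S)"
  unfolding le_up_iff mem_up by (meson order_trans order_refl)
lemma up_down: "le_up R S \<Longrightarrow> le_up (mr_down R) (mr_down S)"
  unfolding le_up_iff mem_down by (meson bot.extremum)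
lemma up_updown: assumes "le_up R S" shows "le_up (mr_updown R) (mr_updown S)"
  unfolding le_up_iff
proof (intro allI impI)
  fix a A assume "(a,A) \<in> mr_updown S"
  then obtain B where "(a,B)\<in>S" "B \<subseteq> A" by (auto simp: mem_updown mem_up)
  then obtain C where "(a,C)\<in>R" "C \<subseteq> A" using assms unfolding le_up_iff by blast
  then show "\<exists>C. (a,C) \<in> mr_updown R \<and> C \<subseteq> A" using sub_updown by blast
qed

lemma mem_peleg: "(a,C) \<in> peleg T S \<longleftrightarrow> (\<exists>B. (a, B) \<in> T \<and>
     (\<exists>f. (\<forall>b\<in>B. (b, f b) \<in> S) \<and> C = (\<Union>b\<in>B. f b)))"
  unfolding peleg_def by blast

lemma peleg_down: assumes "le_down R S" shows "le_down (peleg T R) (peleg T S)"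
  unfolding le_down_iff
proof (intro allI impI)
  fix a C assume "(a,C) \<in> peleg T R"
  then obtain B f where B: "(a,B)\<in>T" and f: "\<forall>b\<in>B. (b, f b) \<in> R" and C: "C = (\<Union>b\<in>B. f b)"
    unfolding mem_peleg by blast
  have "\<forall>b\<in>B. \<exists>D. (b,D)\<in>S \<and> f b \<subseteq> D" using f assms unfolding le_down_iff by blast
  then obtain g where g: "\<forall>b\<in>B. (b,g b)\<in>S \<and> f b \<subseteq> g b" by metis
  show "\<exists>D. (a,D) \<in> peleg T S \<and> C \<subseteq> D"
  proof (intro exI conjI)
    show "(a, \<Union>b\<in>B. g b) \<in> peleg T S" unfolding mem_peleg using B g by blast
    show "C \<subseteq> (\<Union>b\<in>B. g b)" using C g by blast
  qed
qed

lemma peleg_up: assumes "le_up R S" shows "le_up (peleg T R) (peleg T S)"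
  unfolding le_up_iff
proof (intro allI impI)
  fix a C assume "(a,C) \<in> peleg T S"
  then obtain B f where B: "(a,B)\<in>T" and f: "\<forall>b\<in>B. (b, f b) \<in> S" and C: "C = (\<Union>b\<in>B. f b)"
    unfolding mem_peleg by blast
  have "\<forall>b\<in>B. \<exists>D. (b,D)\<in>R \<and> D \<subseteq> f b" using f assms unfolding le_up_iff by blast
  then obtain g where g: "\<forall>b\<in>B. (b,g b)\<in>R \<and> g b \<subseteq> f b" by metis
  show "\<exists>D. (a,D) \<in> peleg T R \<and> D \<subseteq> C"
  proof (intro exI conjI)
    show "(a, \<Union>b\<in>B. g b) \<in> peleg T R" unfolding mem_peleg using B g by blast
    show "(\<Union>b\<in>B. g b) \<subseteq> C" using C g by blast
  qed
qed

lemma ball3: "P a \<Longrightarrow> P b \<Longrightarrow> P c \<Longrightarrow> \<forall>x\<in>{a,b,c}. P x"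
  by blast

lemma ud_cup: "le_updown R R' \<Longrightarrow> le_updown S S' \<Longrightarrow> le_updown (mcup R S) (mcup R' S')"
  unfolding le_updown_def using down_cup up_cup by blast
lemma ud_cap: "le_updown R R' \<Longrightarrow> le_updown S S' \<Longrightarrow> le_updown (mcap R S) (mcap R' S')"
  unfolding le_updown_def using down_cap up_cap by blast
lemma ud_cong: assumes "le_updown R S" shows
         "le_updown (R \<union> T) (S \<union> T) \<and> le_updown (T \<union> R) (T \<union> S) \<and>
         le_updown (mr_up R) (mr_up S) \<and> le_updown (mr_down R) (mr_down S) \<and>
         le_updown (mr_updown R) (mr_updown S)"
proof -
  have d: "le_down R S" and u: "le_up R S" using assms unfolding le_updown_def by auto
  show ?thesis unfolding le_updown_def
    using down_Un1[OF d] down_Un2[OF d] up_Un1[OF u] up_Un2[OF u] down_up[OF d] down_down[OF d]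
      down_updown[OF d] up_up[OF u] up_down[OF u] up_updown[OF u]
    by (intro conjI)
qed
lemma d_cong: assumes d: "le_down R S" shows
         "le_down (R \<union> T) (S \<union> T) \<and> le_down (T \<union> R) (T \<union> S) \<and>
         le_down (mr_up R) (mr_up S) \<and> le_down (mr_down R) (mr_down S) \<and>
         le_down (mr_updown R) (mr_updown S)"
  using down_Un1[OF d] down_Un2[OF d] down_up[OF d] down_down[OF d] down_updown[OF d] by (intro conjI)
lemma u_cong: assumes u: "le_up R S" shows
         "le_up (R \<union> T) (S \<union> T) \<and> le_up (T \<union> R) (T \<union> S) \<and>
         le_up (mr_up R) (mr_up S) \<and> le_up (mr_down R) (mr_down S) \<and>
         le_up (mr_updown R) (mr_updown S)"
  using up_Un1[OF u] up_Un2[OF u] up_up[OF u] up_down[OF u] up_updown[OF u] by (intro conjI)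
lemma ud_peleg: "le_updown R S \<Longrightarrow> le_updown (peleg T R) (peleg T S)"
  unfolding le_updown_def using peleg_down peleg_up by blast

theorem proposition5p3:
  fixes U :: "('a, 'b) mrel"
  defines "U \<equiv> UNIV"
  shows
   "(\<forall>R S T :: ('a,'b) mrel. mcup R (mcup S T) = mcup (mcup R S) T) \<and>
    (\<forall>R S :: ('a,'b) mrel. mcup R S = mcup S R) \<and>
    (\<forall>R :: ('a,'b) mrel. mcup one_cup R = R \<and> mcup R one_cup = R) \<and>
    (\<forall>R S T :: ('a,'b) mrel. mcap R (mcap S T) = mcap (mcap R S) T) \<and>
    (\<forall>R S :: ('a,'b) mrel. mcap R S = mcap S R) \<and>
    (\<forall>R :: ('a,'b) mrel. mcap one_cap R = R \<and> mcap R one_cap = R) \<and>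
    (\<forall>le \<in> {le_down, le_up, le_updown :: ('a,'b) mrel \<Rightarrow> ('a,'b) mrel \<Rightarrow> bool}.
       reflp le \<and> transp le \<and>
       (\<forall>R R' S S'. le R R' \<longrightarrow> le S S' \<longrightarrow> le (mcup R S) (mcup R' S')) \<and>
       (\<forall>R R' S S'. le R R' \<longrightarrow> le S S' \<longrightarrow> le (mcap R S) (mcap R' S'))) \<and>
    (\<forall>R. le_down {} R \<and> le_down R U) \<and>
    (\<forall>R. le_up U R \<and> le_up R {}) \<and>
    bij (icompl :: ('a,'b) mrel \<Rightarrow> ('a,'b) mrel) \<and>
    (\<forall>R S :: ('a,'b) mrel. icompl (mcup R S) = mcap (icompl R) (icompl S)) \<and>
    (\<forall>R S :: ('a,'b) mrel. icompl (mcap R S) = mcup (icompl R) (icompl S)) \<and>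
    icompl (one_cup :: ('a,'b) mrel) = one_cap \<and>
    icompl (one_cap :: ('a,'b) mrel) = one_cup \<and>
    (\<forall>R S :: ('a,'b) mrel. le_down R S \<longleftrightarrow> le_up (icompl S) (icompl R)) \<and>
    (\<forall>R S :: ('a,'b) mrel. le_up R S \<longleftrightarrow> le_down (icompl S) (icompl R)) \<and>
    (\<forall>R S :: ('a,'b) mrel. le_updown R S \<longleftrightarrow> le_updown (icompl S) (icompl R)) \<and>
    (\<forall>le \<in> {le_down, le_up, le_updown :: ('a,'b) mrel \<Rightarrow> ('a,'b) mrel \<Rightarrow> bool}.
       \<forall>R S T. le R S \<longrightarrow>
         le (R \<union> T) (S \<union> T) \<and> le (T \<union> R) (T \<union> S) \<and>
         le (mr_up R) (mr_up S) \<and> le (mr_down R) (mr_down S) \<and>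
         le (mr_updown R) (mr_updown S)) \<and>
    (\<forall>(T :: ('a,'b) mrel) (R :: ('b,'c) mrel) S.
       (le_down R S \<longrightarrow> le_down (peleg T R) (peleg T S)) \<and>
       (le_up R S \<longrightarrow> le_up (peleg T R) (peleg T S)) \<and>
       (le_updown R S \<longrightarrow> le_updown (peleg T R) (peleg T S)))"
proof -
  have bnd1: "\<forall>R. le_down {} R \<and> le_down R U"
    unfolding U_def le_down_iff by blast
  have bnd2: "\<forall>R. le_up U R \<and> le_up R {}"
    unfolding U_def le_up_iff by blast
  have bij: "bij (icompl :: ('a,'b) mrel \<Rightarrow> ('a,'b) mrel)"
    by (metis bijI' icompl_icompl)
  have ud_icompl: "\<And>R S :: ('a,'b) mrel. le_updown R S \<longleftrightarrow> le_updown (icompl S) (icompl R)"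
    unfolding le_updown_def using down_icompl up_icompl by blast
  show ?thesis
    apply (intro conjI)
    subgoal by (intro allI, rule mcup_assoc)
    subgoal by (intro allI, rule mcup_comm)
    subgoal by (intro allI, rule mcup_one)
    subgoal by (intro allI, rule mcap_assoc)
    subgoal by (intro allI, rule mcap_comm)
    subgoal by (intro allI, rule mcap_one)
    subgoal apply (rule ball3)
      subgoal using down_pre down_cup down_cap by blast
      subgoal using up_pre up_cup up_cap by blast
      subgoal using updown_pre ud_cup ud_cap by blast
      done
    subgoal by (rule bnd1)
    subgoal by (rule bnd2)
    subgoal by (rule bij)
    subgoal by (intro allI, rule icompl_cup)
    subgoal by (intro allI, rule icompl_cap)
    subgoal by (rule icompl_one_cup)
    subgoal by (rule icompl_one_cap)
    subgoal by (intro allI, rule down_icompl)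
    subgoal by (intro allI, rule up_icompl)
    subgoal by (intro allI, rule ud_icompl)
    subgoal apply (rule ball3)
      subgoal by (intro allI impI, rule d_cong)
      subgoal by (intro allI impI, rule u_cong)
      subgoal by (intro allI impI, rule ud_cong)
      done
    subgoal using peleg_down peleg_up ud_peleg by blast
    done
qed

end
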